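(* Let $X=\{r_0,r_1,i\}$, $R=\{r_0,r_1\}$, $I=\{i\}$, $\mathcal A=\mathcal P(X)$, and define $\Pi_R:X\to R$ by $\Pi_R(r_0)=r_0$, $\Pi_R(r_1)=r_1$, $\Pi_R(i)=r_0$. Let $G=\{(x,x):x\in X\}$. Fix $\eta\in[0,1)$ with $\eta\neq0$. Let $m(i)=0$, $m(r_0)=m(r_1)=\frac1{1-\eta}$, $\mu(B)=\sum_{x\in B}m(x)$ for $B\subseteq X$, and let $\mu^{\otimes2}$ be the finitely additive set function on $\mathcal P(X\times X)$ determined by $\mu^{\otimes2}(A\times B)=\mu(A)\mu(B)$ (equivalently $\mu^{\otimes2}(S)=\sum_{(x,y)\in S}m(x)m(y)$). Then $(X,\mathcal P(X),\mu,\mu^{\otimes2},R,I,\Pi_R,G,E_0,\eta)$ with $E_0=\mu(R)+\mu(I)=\frac{2}{1-\eta}$ is an admissible structural model.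
   Context: For relations, $H\circ K=\{(x,z):\exists y\,(x,y)\in H,(y,z)\in K\}$. An admissible structural model is a tuple $(X,\mathcal A,\mu,\mu^{\otimes2},R,I,\Pi_R,G,E_0,\eta)$ with $X$ nonempty, $\mathcal A$ an algebra on $X$, $\mu:\mathcal A\to[0,\infty)$ finitely additive, $\mu^{\otimes2}$ finitely additive on the product algebra with $\mu^{\otimes2}(B_1\times B_2)=\mu(B_1)\mu(B_2)$, $R,I\in\mathcal A$ disjoint, $\Pi_R:X\to R$, $G$ in the product algebra, $E_0>0$, $\eta\in[0,1]$, satisfying: Axiom I: $\Pi_R\circ\Pi_R=\Pi_R$, $\Pi_R|_R=\mathrm{id}_R$, $\Pi_R^{-1}(B)\in\mathcal A$ for measurable $B\subseteq R$; Axiom II: $G$ reflexive, symmetric, $G\circ G=G$; Axiom III: $\mu(R)+\mu(I)=E_0$, $\mu(\Pi_R^{-1}(B))=\mu(B)$ for measurable $B\subseteq R$, and for all $B\in\mathcal A$, $\mu^{\otimes2}((B\times X)\cap G)=\mu(B)+\eta\,\mu^{\otimes2}((\Pi_R^{-1}(B)\times X)\cap G)$. *)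

theory Defs
  imports "HOL-Analysis.Analysis"
begin

definition prod_alg :: "'a set \<Rightarrow> 'a set set \<Rightarrow> ('a \<times> 'a) set set" where
  "prod_alg X A = \<Inter> {M. algebra (X \<times> X) M \<and> {B1 \<times> B2 | B1 B2. B1 \<in> A \<and> B2 \<in> A} \<subseteq> M}"

definition fin_add :: "'b set set \<Rightarrow> ('b set \<Rightarrow> real) \<Rightarrow> bool" where
  "fin_add M f \<longleftrightarrow> (\<forall>B\<in>M. 0 \<le> f B) \<and> f {} = 0 \<and>
     (\<forall>B\<in>M. \<forall>C\<in>M. B \<inter> C = {} \<longrightarrow> f (B \<union> C) = f B + f C)"

definition admissible_structural_model ::
  "'a set \<Rightarrow> 'a set set \<Rightarrow> ('a set \<Rightarrow> real) \<Rightarrow> (('a \<times> 'a) set \<Rightarrow> real) \<Rightarrow>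
   'a set \<Rightarrow> 'a set \<Rightarrow> ('a \<Rightarrow> 'a) \<Rightarrow> ('a \<times> 'a) set \<Rightarrow> real \<Rightarrow> real \<Rightarrow> bool" where
  "admissible_structural_model X A \<mu> \<mu>2 R I PR G E0 \<eta> \<longleftrightarrow>
     X \<noteq> {} \<and> algebra X A \<and> fin_add A \<mu> \<and> fin_add (prod_alg X A) \<mu>2 \<and>
     (\<forall>B1\<in>A. \<forall>B2\<in>A. \<mu>2 (B1 \<times> B2) = \<mu> B1 * \<mu> B2) \<and>
     R \<in> A \<and> I \<in> A \<and> R \<inter> I = {} \<and>
     (\<forall>x\<in>X. PR x \<in> R) \<and>
     G \<in> prod_alg X A \<and> E0 > 0 \<and> 0 \<le> \<eta> \<and> \<eta> \<le> 1 \<and>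
     (\<forall>x\<in>X. PR (PR x) = PR x) \<and> (\<forall>x\<in>R. PR x = x) \<and>
     (\<forall>B\<in>A. B \<subseteq> R \<longrightarrow> {x\<in>X. PR x \<in> B} \<in> A) \<and>
     (\<forall>x\<in>X. (x, x) \<in> G) \<and> (\<forall>x y. (x, y) \<in> G \<longrightarrow> (y, x) \<in> G) \<and> G O G = G \<and>
     \<mu> R + \<mu> I = E0 \<and>
     (\<forall>B\<in>A. B \<subseteq> R \<longrightarrow> \<mu> {x\<in>X. PR x \<in> B} = \<mu> B) \<and>
     (\<forall>B\<in>A. \<mu>2 ((B \<times> X) \<inter> G) = \<mu> B + \<eta> * \<mu>2 (({x\<in>X. PR x \<in> B} \<times> X) \<inter> G))"

datatype pt = r0 | r1 | i0

definition X3 :: "pt set" where "X3 = {r0, r1, i0}"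

fun Pi3 :: "pt \<Rightarrow> pt" where
  "Pi3 r0 = r0" | "Pi3 r1 = r1" | "Pi3 i0 = r0"

definition m3 :: "real \<Rightarrow> pt \<Rightarrow> real" where
  "m3 \<eta> x = (if x = i0 then 0 else 1 / (1 - \<eta>))"

definition mu3 :: "real \<Rightarrow> pt set \<Rightarrow> real" where
  "mu3 \<eta> B = (\<Sum>x\<in>B. m3 \<eta> x)"

definition mu3sq :: "real \<Rightarrow> (pt \<times> pt) set \<Rightarrow> real" where
  "mu3sq \<eta> S = (\<Sum>p\<in>S. m3 \<eta> (fst p) * m3 \<eta> (snd p))"

end

theory Submission
  imports Defs
begin

lemma X3_UNIV: "X3 = UNIV"
  unfolding X3_def using pt.exhaust by blast

lemma fin_pt: "finite (S :: pt set)"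
proof -
  have "S \<subseteq> X3" by (simp add: X3_UNIV)
  then show ?thesis by (rule finite_subset) (simp add: X3_def)
qed

lemma fin_pt2: "finite (S :: (pt \<times> pt) set)"
proof -
  have "S \<subseteq> X3 \<times> X3" by (simp add: X3_UNIV)
  then show ?thesis by (rule finite_subset) (simp add: X3_def)
qed

lemma G_eq: "{(x, x) | x. x \<in> X3} = {r0}\<times>{r0} \<union> {r1}\<times>{r1} \<union> {i0}\<times>{i0}"
  by (auto simp: X3_def)

lemma G_in: "{(x, x) | x. x \<in> X3} \<in> prod_alg X3 (Pow X3)"
  unfolding prod_alg_def
proof (intro InterI, clarify)
  fix M assume a: "algebra (X3 \<times> X3) M" and s: "{B1 \<times> B2 |B1 B2. B1 \<in> Pow X3 \<and> B2 \<in> Pow X3} \<subseteq> M"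
  have r: "{a}\<times>{b} \<in> M" for a b using s by (auto simp: X3_UNIV simp del: Sigma_empty1 Sigma_empty2 insert_Times_insert)
  show "{(x, x) | x. x \<in> X3} \<in> M"
  proof -
    interpret algebra "X3 \<times> X3" M by (rule a)
    show ?thesis unfolding G_eq by (intro Un r)
  qed
qed

lemma m3_nn: "0 \<le> \<eta> \<Longrightarrow> \<eta> < 1 \<Longrightarrow> 0 \<le> m3 \<eta> x"
  by (simp add: m3_def)

theorem theorem5p2:
  fixes \<eta> :: real
  assumes "0 \<le> \<eta>" and "\<eta> < 1" and "\<eta> \<noteq> 0"
  shows "admissible_structural_model X3 (Pow X3) (mu3 \<eta>) (mu3sq \<eta>) {r0, r1} {i0} Pi3
           {(x, x) | x. x \<in> X3} (2 / (1 - \<eta>)) \<eta>"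
proof -
  have nn: "0 \<le> m3 \<eta> x" for x using assms m3_nn by auto
  have fa1: "fin_add (Pow X3) (mu3 \<eta>)"
    unfolding fin_add_def mu3_def
    by (auto intro!: sum_nonneg nn sum.union_disjoint fin_pt)
  have fa2: "fin_add (prod_alg X3 (Pow X3)) (mu3sq \<eta>)"
    unfolding fin_add_def mu3sq_def
    by (auto intro!: sum_nonneg mult_nonneg_nonneg nn sum.union_disjoint fin_pt2)
  have rect: "mu3sq \<eta> (B1 \<times> B2) = mu3 \<eta> B1 * mu3 \<eta> B2" for B1 B2
    unfolding mu3sq_def mu3_def by (simp add: sum_product sum.cartesian_product case_prod_beta)
  have key: "mu3sq \<eta> ((B \<times> X3) \<inter> {(x, x) | x. x \<in> X3}) =
     mu3 \<eta> B + \<eta> * mu3sq \<eta> (({x\<in>X3. Pi3 x \<in> B} \<times> X3) \<inter> {(x, x) | x. x \<in> X3})" for B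
  proof -
    have e1: "(B \<times> X3) \<inter> {(x, x) | x. x \<in> X3} = (\<lambda>x. (x,x)) ` B" by (auto simp: X3_UNIV)
    have e2: "({x\<in>X3. Pi3 x \<in> B} \<times> X3) \<inter> {(x, x) | x. x \<in> X3} = (\<lambda>x. (x,x)) ` {x. Pi3 x \<in> B}"
      by (auto simp: X3_UNIV)
    have s: "mu3sq \<eta> ((\<lambda>x. (x,x)) ` S) = (\<Sum>x\<in>S. m3 \<eta> x * m3 \<eta> x)" for S
      unfolding mu3sq_def by (subst sum.reindex) (auto simp: inj_on_def)
    have c: "1/(1-\<eta>) * (1/(1-\<eta>)) = 1/(1-\<eta>) + \<eta> * (1/(1-\<eta>) * (1/(1-\<eta>)))"
    proof -
      have d: "1 - \<eta> \<noteq> 0" using assms by simp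
      have "1/d*(1/d) = 1/d + (1-d)*(1/d*(1/d))" if "d \<noteq> 0" for d :: real
        using that by (simp add: field_simps)
      from this[OF d] show ?thesis by (simp only: diff_diff_eq2 add_diff_cancel_left')
    qed
    have B: "B \<subseteq> {r0, r1, i0}" using X3_UNIV X3_def by auto
    have pre: "{x. Pi3 x \<in> B} = (if r0 \<in> B then {r0, i0} else {}) \<union> (if r1 \<in> B then {r1} else {})"
      apply (rule set_eqI) subgoal for x by (cases x) auto done
    define k where "k = 1/(1-\<eta>)"
    have m: "m3 \<eta> x = (if x = i0 then 0 else k)" for x by (simp add: m3_def k_def)
    have hc: "k*k = k + \<eta>*(k*k)" unfolding k_def by (rule c)
    have BP: "B \<in> Pow {r0, r1, i0}" using B by simp
    have "mu3 \<eta> B + \<eta> * (\<Sum>x\<in>{x. Pi3 x \<in> B}. m3 \<eta> x * m3 \<eta> x) = (\<Sum>x\<in>B. m3 \<eta> x * m3 \<eta> x)"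
      using BP unfolding pre mu3_def m
      apply (simp add: Pow_insert)
      apply (elim disjE)
      using hc by (simp_all add: algebra_simps)
    then show ?thesis unfolding e1 e2 s by simp
  qed
  have pre_mu: "mu3 \<eta> {x\<in>X3. Pi3 x \<in> B} = mu3 \<eta> B" if "B \<subseteq> {r0, r1}" for B
  proof -
    have "B \<in> Pow {r0, r1}" using that by simp
    moreover have "{x\<in>X3. Pi3 x \<in> B} = (if r0 \<in> B then {r0, i0} else {}) \<union> (if r1 \<in> B then {r1} else {})"
      apply (rule set_eqI) subgoal for x by (cases x) (auto simp: X3_UNIV) done
    ultimately show ?thesis unfolding mu3_def
      by (simp add: Pow_insert) (elim disjE, simp_all add: m3_def)
  qed
  have E: "mu3 \<eta> {r0, r1} + mu3 \<eta> {i0} = 2 / (1 - \<eta>)"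
    by (simp add: mu3_def m3_def)
  have PR: "\<forall>x\<in>X3. Pi3 x \<in> {r0, r1}" "\<forall>x\<in>X3. Pi3 (Pi3 x) = Pi3 x" "\<forall>x\<in>{r0, r1}. Pi3 x = x"
    by (auto simp: X3_UNIV) (case_tac x; simp)+
  have alg: "algebra X3 (Pow X3)" by (rule algebra_Pow)
  have RI: "{r0, r1} \<in> Pow X3" "{i0} \<in> Pow X3" "{r0, r1} \<inter> {i0} = {}" "X3 \<noteq> {}"
    by (auto simp: X3_def)
  have meas: "\<forall>B\<in>Pow X3. B \<subseteq> {r0, r1} \<longrightarrow> {x\<in>X3. Pi3 x \<in> B} \<in> Pow X3" by auto
  have Gp: "\<forall>x\<in>X3. (x, x) \<in> {(x, x) | x. x \<in> X3}"
    "\<forall>x y. (x, y) \<in> {(x, x) | x. x \<in> X3} \<longrightarrow> (y, x) \<in> {(x, x) | x. x \<in> X3}"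
    "{(x, x) | x. x \<in> X3} O {(x, x) | x. x \<in> X3} = {(x, x) | x. x \<in> X3}"
    by auto
  have rectB: "\<forall>B1\<in>Pow X3. \<forall>B2\<in>Pow X3. mu3sq \<eta> (B1 \<times> B2) = mu3 \<eta> B1 * mu3 \<eta> B2"
    using rect by blast
  have preB: "\<forall>B\<in>Pow X3. B \<subseteq> {r0, r1} \<longrightarrow> mu3 \<eta> {x\<in>X3. Pi3 x \<in> B} = mu3 \<eta> B"
    using pre_mu by blast
  have keyB: "\<forall>B\<in>Pow X3. mu3sq \<eta> ((B \<times> X3) \<inter> {(x, x) | x. x \<in> X3}) =
     mu3 \<eta> B + \<eta> * mu3sq \<eta> (({x\<in>X3. Pi3 x \<in> B} \<times> X3) \<inter> {(x, x) | x. x \<in> X3})"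
    using key by blast
  have le1: "\<eta> \<le> 1" using assms by simp
  have E0: "2 / (1 - \<eta>) > 0" using assms by simp
  show ?thesis
    unfolding admissible_structural_model_def
    apply (intro conjI)
    by (fact fa1 fa2 rectB G_in assms E PR preB keyB alg RI meas Gp E0 le1)+
qed

end
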